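(* The function $f(\gamma)=\dfrac{4^{\gamma-1}\sqrt\pi\,\Gamma(2-\gamma)}{\Gamma(\tfrac32-\gamma)}$ is strictly decreasing on $(\tfrac32,2)$. Moreover, for every $x\in(\tfrac32,2)$, $$\frac{4^{x-1}\sqrt\pi\,\Gamma(2-x)}{\Gamma(\tfrac32-x)}=2^{2x-1}-x\int_0^{1/2}t^{1-x}(1-t)^{-1-x}\,\mathrm dt.$$
   Context: $\Gamma$ denotes the Euler Gamma function (analytically continued to negative non-integer arguments). *)

theory Defs
  imports "HOL-Analysis.Analysis"
begin

definition f8 :: "real \<Rightarrow> real" where
  "f8 \<gamma> = 4 powr (\<gamma> - 1) * sqrt pi * Gamma (2 - \<gamma>) / Gamma (3/2 - \<gamma>)"

end

theory Submission
  imports Defs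
begin


lemma derivG:
  fixes x t :: real
  assumes t: "0 < t" "t < 1"
  shows "((\<lambda>t. t powr (2-x) * (1-t) powr (-x) + 2 * (t powr (2-x) * (1-t) powr (1-x)))
     has_real_derivative (x * (t powr (1-x) * (1-t) powr (-1-x)) - 2*(2*x-3) * (t powr (1-x) * (1-t) powr (1-x)))) (at t)"
proof -
  have d1: "((\<lambda>t. t powr (2-x)) has_real_derivative (2-x) * t powr (1-x)) (at t)"
    using has_real_derivative_powr[OF t(1), of "2-x"] by (simp add: algebra_simps)
  have d2: "((\<lambda>t. (1-t) powr q) has_real_derivative (q * (1-t) powr (q-1)) * (-1)) (at t)" for q
    using DERIV_chain2[OF has_real_derivative_powr[of "1-t" q] DERIV_diff[OF DERIV_const DERIV_ident]] t
    by simp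
  define u where "u = t powr (1-x)"
  define v where "v = (1-t) powr (-1-x)"
  have e1: "t powr (2-x) = t * u" unfolding u_def using t
    by (simp add: powr_add[symmetric] powr_mult_base)
  have e2: "(1-t) powr (-x) = (1-t) * v" unfolding v_def using t
    by (simp add: powr_add[symmetric] powr_mult_base)
  have e3: "(1-t) powr (1-x) = (1-t)^2 * v" unfolding v_def using t
    by (simp add: power2_eq_square powr_mult_base mult.assoc) 
  have e4: "(1-t) powr (-x-1) = v" unfolding v_def
    by (rule arg_cong[where f="\<lambda>e. (1-t) powr e"]) simp
  have e5: "(1-t) powr (1-x-1) = (1-t) * v" using e2 by simp
  have D: "((\<lambda>t. t powr (2-x) * (1-t) powr (-x) + 2 * (t powr (2-x) * (1-t) powr (1-x)))
     has_real_derivative ((2-x) * t powr (1-x) * (1-t) powr (-x) + ((-x) * (1-t) powr (-x-1) * (-1)) * t powr (2-x)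
       + 2 * ((2-x) * t powr (1-x) * (1-t) powr (1-x) + ((1-x) * (1-t) powr (1-x-1) * (-1)) * t powr (2-x)))) (at t)"
    by (intro DERIV_add DERIV_mult DERIV_cmult d1 d2)
  show ?thesis
    apply (rule DERIV_cong[OF D])
    unfolding e1 e2 e3 e4 e5 u_def[symmetric] v_def[symmetric]
    by (simp add: algebra_simps power2_eq_square)
qed


lemma half_beta:
  fixes x :: real
  assumes x: "x < 2"
  shows "((\<lambda>t. t powr (1-x) * (1-t) powr (1-x)) has_integral Beta (2-x) (2-x) / 2) {0..1/2}"
proof -
  define q where "q = (\<lambda>t::real. t powr (1-x) * (1-t) powr (1-x))"
  have e: "2-x-1 = 1-x" by simp
  have B: "(q has_integral Beta (2-x) (2-x)) {0..1}"
    using has_integral_Beta_real[of "2-x" "2-x"] x unfolding q_def e by simp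
  hence qi: "q integrable_on {0..1}" by blast
  have i1: "q integrable_on {0..1/2}" by (rule integrable_subinterval_real[OF qi]) auto
  have i2: "q integrable_on {1/2..1}" by (rule integrable_subinterval_real[OF qi]) auto
  have c: "integral {0..1/2} q + integral {1/2..1} q = Beta (2-x) (2-x)"
    using Henstock_Kurzweil_Integration.integral_combine[where a=0 and c="1/2" and b=1 and f=q] qi B by (simp add: integral_unique)
  have r: "((\<lambda>s. q (-s)) has_integral integral {1/2..1} q) {-1..-(1/2)}"
    using i2 by (simp add: has_integral_integral)
  have r2: "((\<lambda>s. q (-(1 *\<^sub>R s + -1))) has_integral (integral {1/2..1} q /\<^sub>R 1 ^ DIM(real)))
     (cbox ((-1 - -1) /\<^sub>R 1) ((-(1/2) - -1) /\<^sub>R 1))"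
    using has_integral_affinity'[of "\<lambda>s. q (-s)" _ "-1" "-(1/2)" 1 "-1"] r by simp
  have r3: "(q has_integral integral {1/2..1} q) {0..1/2}"
  proof -
    have "((\<lambda>s. q (-(1 *\<^sub>R s + -1))) has_integral integral {1/2..1} q) {0..1/2}"
      using r2 by simp
    moreover have "q (-(1 *\<^sub>R s + -1)) = q s" for s unfolding q_def by simp
    ultimately show ?thesis by simp
  qed
  have "integral {0..1/2} q = integral {1/2..1} q" using r3 by (simp add: integral_unique)
  with c have "integral {0..1/2} q = Beta (2-x) (2-x) / 2" by simp
  with i1 show ?thesis unfolding q_def[symmetric] by (metis has_integral_integral)
qed


lemma dup_real:
  fixes a :: real
  assumes "a > 0"
  shows "Gamma a * Gamma (a + 1/2) = 2 powr (1 - 2*a) * sqrt pi * Gamma (2*a)"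
proof -
  have n1: "complex_of_real a \<notin> \<int>\<^sub>\<le>\<^sub>0" using assms
    by (auto simp: of_real_in_nonpos_Ints_iff elim!: nonpos_Ints_cases)
  have n2: "complex_of_real a + 1/2 \<notin> \<int>\<^sub>\<le>\<^sub>0" using assms
    by (auto elim!: nonpos_Ints_cases simp: complex_eq_iff)
  have "Gamma (complex_of_real a) * Gamma (complex_of_real a + 1/2) =
             exp ((1 - 2*complex_of_real a) * of_real (ln 2)) * of_real (sqrt pi) * Gamma (2*complex_of_real a)"
    by (rule Gamma_legendre_duplication[OF n1 n2])
  also have "exp ((1 - 2*complex_of_real a) * of_real (ln 2)) = of_real (2 powr (1 - 2*a))"
    by (simp add: powr_def exp_of_real[symmetric])
  finally have "complex_of_real (Gamma a * Gamma (a + 1/2)) = complex_of_real (2 powr (1 - 2*a) * sqrt pi * Gamma (2*a))"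
    by (simp add: Gamma_complex_of_real[symmetric])
  thus ?thesis by (simp only: of_real_eq_iff)
qed

lemma alg:
  fixes g G H a :: real
  assumes "g \<noteq> 0" "H \<noteq> 0"
  shows "2 * (G * (a - 1/2) * g / H) * G / g = (2*a - 1) * (G * G / H)"
  using assms by (simp add: field_simps)

lemma f8_beta:
  fixes x :: real
  assumes "3/2 < x" "x < 2"
  shows "4 powr (x - 1) * sqrt pi * Gamma (2 - x) / Gamma (3/2 - x) = (3 - 2*x) * Beta (2-x) (2-x)"
proof -
  define a where "a = 2 - x"
  have a: "0 < a" "a < 1/2" using assms unfolding a_def by auto
  have xa: "x = 2 - a" unfolding a_def by simp
  have D: "Gamma a * Gamma (a + 1/2) = 2 powr (1 - 2*a) * sqrt pi * Gamma (2*a)"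
    using dup_real a by simp
  have np: "a - 1/2 \<notin> \<int>\<^sub>\<le>\<^sub>0"
  proof
    assume "a - 1/2 \<in> \<int>\<^sub>\<le>\<^sub>0"
    then obtain n :: int where "a - 1/2 = of_int n" "n \<le> 0" by (auto elim!: nonpos_Ints_cases)
    moreover have "-1 < a - 1/2" "a - 1/2 < 0" using a by auto
    ultimately have "-1 < real_of_int n" "real_of_int n < 0" by simp_all
    hence "-1 < n" "n < 0" by linarith+
    thus False by simp
  qed
  have P: "Gamma (a + 1/2) = (a - 1/2) * Gamma (a - 1/2)"
    using Gamma_plus1[of "a - 1/2"] np by (simp add: add.commute)
  have g1: "Gamma (a - 1/2) \<noteq> 0" using np by (simp add: Gamma_eq_zero_iff)
  have g2: "Gamma a > 0" "Gamma (2*a) > 0" using a by (simp_all add: Gamma_real_pos)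
  have p4: "4 powr (1 - a) = 2 * 2 powr (1 - 2*a)"
  proof -
    have h4: "(4::real) = 2 powr 2" by simp
    have "4 powr (1-a) = (2 powr 2) powr (1-a)" by (subst h4) (rule refl)
    also have "\<dots> = 2 powr (2 * (1-a))" by (simp only: powr_powr)
    also have "\<dots> = 2 powr (1 + (1 - 2*a))" by (simp add: algebra_simps)
    also have "\<dots> = 2 powr 1 * 2 powr (1 - 2*a)" by (simp only: powr_add)
    also have "\<dots> = 2 * 2 powr (1 - 2*a)" by simp
    finally show ?thesis .
  qed
  have e1: "x - 1 = 1 - a" "3/2 - x = a - 1/2" "3 - 2*x = 2*a - 1" using xa by auto
  have "Beta a a = Gamma a * Gamma a / Gamma (2*a)" unfolding Beta_def by (simp only: mult_2)
  moreover have "4 powr (1 - a) * sqrt pi * Gamma a / Gamma (a - 1/2) = (2*a - 1) * (Gamma a * Gamma a / Gamma (2*a))"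
  proof -
    have sp: "sqrt pi > 0" by simp
    have "(a - 1/2) \<noteq> 0" using a by simp
    from D P have D': "Gamma a * ((a - 1/2) * Gamma (a - 1/2)) = 2 powr (1 - 2*a) * sqrt pi * Gamma (2*a)" by simp
    have cs: "2 powr (1 - 2*a) * sqrt pi = Gamma a * (a - 1/2) * Gamma (a - 1/2) / Gamma (2*a)"
      using D' g2 by (simp add: field_simps)
    have "4 powr (1 - a) * sqrt pi * Gamma a / Gamma (a - 1/2) = 2 * (2 powr (1 - 2*a) * sqrt pi) * Gamma a / Gamma (a - 1/2)"
      unfolding p4 by simp
    also have "\<dots> = 2 * (Gamma a * (a - 1/2) * Gamma (a - 1/2) / Gamma (2*a)) * Gamma a / Gamma (a - 1/2)"
      unfolding cs ..
    also have "\<dots> = (2*a - 1) * (Gamma a * Gamma a / Gamma (2*a))"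
      by (rule alg[OF g1]) (use g2 in simp)
    finally show ?thesis .
  qed
  ultimately show ?thesis unfolding e1 a_def[symmetric] by simp
qed

lemma ftc:
  fixes x :: real
  assumes x: "3/2 < x" "x < 2"
  shows "((\<lambda>t. x * (t powr (1-x) * (1-t) powr (-1-x)) - 2*(2*x-3) * (t powr (1-x) * (1-t) powr (1-x)))
          has_integral 2 powr (2*x - 1)) {0..1/2}"
proof -
  define G where "G = (\<lambda>t::real. t powr (2-x) * (1-t) powr (-x) + 2 * (t powr (2-x) * (1-t) powr (1-x)))"
  have cont: "continuous_on {0..1/2} G"
    unfolding G_def using x
    by (intro continuous_intros continuous_on_powr') auto
  have der: "(G has_vector_derivative (x * (t powr (1-x) * (1-t) powr (-1-x)) - 2*(2*x-3) * (t powr (1-x) * (1-t) powr (1-x)))) (at t)"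
    if "t \<in> {0<..<1/2}" for t
    unfolding G_def has_real_derivative_iff_has_vector_derivative[symmetric]
    by (rule derivG) (use that in auto)
  have G0: "G 0 = 0" unfolding G_def by simp
  have G1: "G (1/2) = 2 powr (2*x - 1)"
  proof -
    have "G (1/2) = (1/2) powr (2-x) * (1/2) powr (-x) + 2 * ((1/2) powr (2-x) * (1/2) powr (1-x))"
      unfolding G_def by simp
    also have "\<dots> = (1/2) powr (2 - 2*x) + 2 * (1/2) powr (3 - 2*x)"
      by (simp add: powr_add[symmetric] algebra_simps)
    also have "(1/2::real) powr (2 - 2*x) = 2 powr (2*x - 2)"
      by (simp add: powr_divide powr_minus_divide[symmetric] algebra_simps)
    also have "(1/2::real) powr (3 - 2*x) = 2 powr (2*x - 3)"
      by (simp add: powr_divide powr_minus_divide[symmetric] algebra_simps)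
    also have "2 powr (2*x - 2) + 2 * 2 powr (2*x - 3) = 2 powr (2*x-2) + 2 powr 1 * 2 powr (2*x - 3)" by simp
    also have "\<dots> = 2 powr (2*x-2) + 2 powr (2*x - 2)" by (simp only: powr_add[symmetric]) simp
    also have "\<dots> = 2 powr 1 * 2 powr (2*x - 2)" by simp
    also have "\<dots> = 2 powr (2*x - 1)" by (simp only: powr_add[symmetric]) simp
    finally show ?thesis .
  qed
  show ?thesis
    using fundamental_theorem_of_calculus_interior[of 0 "1/2" G, OF _ cont der] G0 G1 by simp
qed

theorem lemma8p4:
  shows "(\<forall>x\<in>{3/2<..<2::real}. \<forall>y\<in>{3/2<..<2::real}. x < y \<longrightarrow> f8 y < f8 x)
    \<and> (\<forall>x\<in>{3/2<..<2::real}.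
          (\<lambda>t. t powr (1 - x) * (1 - t) powr (-1 - x)) integrable_on {0..1/2}
        \<and> f8 x = 2 powr (2*x - 1)
            - x * integral {0..1/2} (\<lambda>t. t powr (1 - x) * (1 - t) powr (-1 - x)))"
proof (intro conjI ballI impI)
  fix x y :: real
  assume x: "x \<in> {3/2<..<2}" and y: "y \<in> {3/2<..<2}" and xy: "x < y"
  have fx: "f8 x = (3 - 2*x) * Beta (2-x) (2-x)" using x unfolding f8_def by (intro f8_beta) auto
  have fy: "f8 y = (3 - 2*y) * Beta (2-y) (2-y)" using y unfolding f8_def by (intro f8_beta) auto
  have m: "Beta (2-x) (2-x) \<le> Beta (2-y) (2-y)" using x y xy by (intro Beta_real_mono) auto
  have p: "Beta (2-x) (2-x) > 0" using x by (auto simp: Beta_def intro!: divide_pos_pos mult_pos_pos Gamma_real_pos)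
  have "(2*x - 3) * Beta (2-x) (2-x) < (2*y - 3) * Beta (2-x) (2-x)" using p xy by simp
  also have "\<dots> \<le> (2*y - 3) * Beta (2-y) (2-y)" using m y by (intro mult_left_mono) auto
  finally show "f8 y < f8 x" unfolding fx fy by (simp add: algebra_simps)
next
  fix x :: real
  assume x: "x \<in> {3/2<..<2}"
  define P where "P = (\<lambda>t::real. t powr (1 - x) * (1 - t) powr (-1 - x))"
  define Q where "Q = (\<lambda>t::real. t powr (1 - x) * (1 - t) powr (1 - x))"
  have F: "((\<lambda>t. x * P t - 2*(2*x-3) * Q t) has_integral 2 powr (2*x - 1)) {0..1/2}"
    using ftc[of x] x unfolding P_def Q_def by auto
  have H: "(Q has_integral Beta (2-x) (2-x) / 2) {0..1/2}"
    using half_beta[of x] x unfolding Q_def by auto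
  have S: "((\<lambda>t. (x * P t - 2*(2*x-3) * Q t) + 2*(2*x-3) * Q t) has_integral
            2 powr (2*x - 1) + 2*(2*x-3) * (Beta (2-x) (2-x) / 2)) {0..1/2}"
    by (intro has_integral_add F has_integral_mult_right H)
  have S2: "((\<lambda>t. (1/x) * (x * P t)) has_integral
            (1/x) * (2 powr (2*x - 1) + 2*(2*x-3) * (Beta (2-x) (2-x) / 2))) {0..1/2}"
    by (rule has_integral_mult_right) (use S in simp)
  have "(\<lambda>t. (1/x) * (x * P t)) = P" using x by (auto simp: fun_eq_iff)
  moreover have "(1/x) * (2 powr (2*x - 1) + 2*(2*x-3) * (Beta (2-x) (2-x) / 2))
      = (1/x) * (2 powr (2*x - 1) + (2*x-3) * Beta (2-x) (2-x))" by simp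
  ultimately have PI: "(P has_integral (1/x) * (2 powr (2*x - 1) + (2*x-3) * Beta (2-x) (2-x))) {0..1/2}"
    using S2 by metis
  show "(\<lambda>t. t powr (1 - x) * (1 - t) powr (-1 - x)) integrable_on {0..1/2}"
    using PI unfolding P_def by blast
  have fx: "f8 x = (3 - 2*x) * Beta (2-x) (2-x)" using x unfolding f8_def by (intro f8_beta) auto
  have "integral {0..1/2} P = (1/x) * (2 powr (2*x - 1) + (2*x-3) * Beta (2-x) (2-x))"
    using PI by (rule integral_unique)
  thus "f8 x = 2 powr (2*x - 1) - x * integral {0..1/2} (\<lambda>t. t powr (1 - x) * (1 - t) powr (-1 - x))"
    unfolding P_def[symmetric] fx using x by (simp add: field_simps)
qed

end
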